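(* For every positive integer $t$ and every $c\in(0,1)$ there exists $\delta=\delta(t,c)\in(0,1)$ such that for all $n>c\delta^{-1}$ the following holds. Let $V$ be a set of $n$ vertices and let $G_R$ and $G_B$ be graphs on vertex set $V$. If $G_R$ has at most $\delta n^2$ edges and $G_B$ has at least $cn^2$ edges, then there exists a set $S\subseteq V$ with $|S|\geq t$ such that $G_B[S]$ has at least $\frac{c}{2}|S|^2$ edges and $G_R[S]$ has no edges. *)

theory Defs
  imports Main Complex_Main
begin

definition graph_on :: "'a set \<Rightarrow> 'a set set \<Rightarrow> bool" where
  "graph_on V E \<longleftrightarrow> (\<forall>e\<in>E. e \<subseteq> V \<and> card e = 2)"

definition induced_edges :: "'a set set \<Rightarrow> 'a set \<Rightarrow> 'a set set" where
  "induced_edges E S = {e \<in> E. e \<subseteq> S}"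

end

theory Submission
  imports Defs
begin

lemma count_sets:
  assumes "finite V" "e \<subseteq> V" "card e = 2" "s \<ge> 2"
  shows "card {S. S \<subseteq> V \<and> card S = s \<and> e \<subseteq> S} = (card V - 2) choose (s - 2)"
proof -
  have fe: "finite e" using assms(1,2) finite_subset by blast
  have "card {S. S \<subseteq> V \<and> card S = s \<and> e \<subseteq> S} = card {T. T \<subseteq> V - e \<and> card T = s - 2}"
  proof (rule bij_betw_same_card[of "\<lambda>S. S - e"], rule bij_betw_byWitness[where f'="\<lambda>T. T \<union> e"])
    show "\<forall>a\<in>{S. S \<subseteq> V \<and> card S = s \<and> e \<subseteq> S}. a - e \<union> e = a" by auto
    show "\<forall>a'\<in>{T. T \<subseteq> V - e \<and> card T = s - 2}. a' \<union> e - e = a'" by auto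
    show "(\<lambda>S. S - e) ` {S. S \<subseteq> V \<and> card S = s \<and> e \<subseteq> S} \<subseteq> {T. T \<subseteq> V - e \<and> card T = s - 2}"
    proof safe
      fix S assume "S \<subseteq> V" "e \<subseteq> S" "s = card S"
      then show "card (S - e) = card S - 2" using assms fe
        by (metis card_Diff_subset finite_subset)
    qed auto
    show "(\<lambda>T. T \<union> e) ` {T. T \<subseteq> V - e \<and> card T = s - 2} \<subseteq> {S. S \<subseteq> V \<and> card S = s \<and> e \<subseteq> S}"
    proof -
      have h: "card (T \<union> e) = card T + 2" if "T \<subseteq> V - e" for T
      proof -
        have "finite T" using that assms(1) finite_subset by blast
        moreover have "T \<inter> e = {}" using that by blast
        ultimately show ?thesis using assms fe card_Un_disjoint by metis
      qed
      show ?thesis using h assms by auto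
    qed
  qed
  also have "\<dots> = card (V - e) choose (s - 2)" using assms(1) by (simp add: n_subsets)
  also have "card (V - e) = card V - 2" using assms fe by (simp add: card_Diff_subset)
  finally show ?thesis .
qed

lemma sum_induced:
  assumes "finite V" "graph_on V E" "s \<ge> 2"
  shows "(\<Sum>S\<in>{S. S \<subseteq> V \<and> card S = s}. card (induced_edges E S)) = card E * ((card V - 2) choose (s - 2))"
proof -
  have fE: "finite E" using assms(1,2) unfolding graph_on_def
    by (meson Pow_iff finite_Pow_iff finite_subset subsetI)
  have fS: "finite {S. S \<subseteq> V \<and> card S = s}" using assms(1) by simp
  have "(\<Sum>S\<in>{S. S \<subseteq> V \<and> card S = s}. card (induced_edges E S))
     = (\<Sum>S\<in>{S. S \<subseteq> V \<and> card S = s}. \<Sum>e\<in>E. if e \<subseteq> S then 1 else 0)"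
    unfolding induced_edges_def using fE by (simp add: sum.If_cases Int_def)
  also have "\<dots> = (\<Sum>e\<in>E. \<Sum>S\<in>{S. S \<subseteq> V \<and> card S = s}. if e \<subseteq> S then 1 else 0)"
    by (rule sum.swap)
  also have "\<dots> = (\<Sum>e\<in>E. (card V - 2) choose (s - 2))"
  proof (rule sum.cong[OF refl])
    fix e assume "e \<in> E"
    then have "e \<subseteq> V" "card e = 2" using assms(2) unfolding graph_on_def by auto
    have "(\<Sum>S\<in>{S. S \<subseteq> V \<and> card S = s}. if e \<subseteq> S then 1 else 0::nat)
        = card {S. S \<subseteq> V \<and> card S = s \<and> e \<subseteq> S}"
      using fS by (simp add: sum.If_cases conj_ac Int_def)
    also have "\<dots> = (card V - 2) choose (s - 2)" using count_sets[OF assms(1) \<open>e \<subseteq> V\<close> \<open>card e = 2\<close> assms(3)] .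
    finally show "(\<Sum>S\<in>{S. S \<subseteq> V \<and> card S = s}. if e \<subseteq> S then 1 else 0::nat) = (card V - 2) choose (s - 2)" .
  qed
  finally show ?thesis by simp
qed

lemma induced_le:
  assumes "graph_on V E" "finite S"
  shows "real (card (induced_edges E S)) \<le> real (card S)^2 / 2"
proof -
  have "induced_edges E S \<subseteq> {e. e \<subseteq> S \<and> card e = 2}"
    using assms unfolding induced_edges_def graph_on_def by auto
  then have "card (induced_edges E S) \<le> card S choose 2"
  proof -
    have "card (induced_edges E S) \<le> card {e. e \<subseteq> S \<and> card e = 2}"
      by (rule card_mono) (use assms(2) \<open>induced_edges E S \<subseteq> _\<close> in auto)
    also have "\<dots> = card S choose 2" using assms(2) by (simp add: n_subsets)
    finally show ?thesis .
  qed
  also have "card S choose 2 = card S * (card S - 1) div 2" by (simp add: choose_two)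
  finally have "2 * card (induced_edges E S) \<le> card S * (card S - 1)" by linarith
  then have "2 * card (induced_edges E S) \<le> card S * card S"
    by (meson diff_le_self le_trans mult_le_mono2)
  then have "2 * real (card (induced_edges E S)) \<le> real (card S) * real (card S)"
    by (metis of_nat_le_iff of_nat_mult of_nat_numeral)
  then show ?thesis by (simp add: power2_eq_square)
qed

lemma choose_rel:
  "(m + 2 choose (k + 2)) * ((k + 2) * (k + 1)) = (m choose k) * ((m + 2) * (m + 1))"
proof -
  have a: "Suc (Suc m) * (Suc m choose Suc k) = (Suc (Suc m) choose Suc (Suc k)) * Suc (Suc k)"
    by (rule Suc_times_binomial_eq)
  have b: "Suc m * (m choose k) = (Suc m choose Suc k) * Suc k"
    by (rule Suc_times_binomial_eq)
  have "(m + 2 choose (k + 2)) * ((k + 2) * (k + 1)) = Suc (Suc m) * (Suc m choose Suc k) * Suc k"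
    using a by (simp add: algebra_simps)
  also have "\<dots> = Suc (Suc m) * (Suc m * (m choose k))" using b by (simp add: algebra_simps)
  finally show ?thesis by (simp add: algebra_simps)
qed


lemma final_arith:
  fixes n s N K gb gr c d :: real
  assumes "gb * K \<le> N * (c/2 * s^2) + s^2/2 * (gr * K)"
    "gb \<ge> c * n^2" "gr \<le> d * n^2" "K > 0" "N * (s * (s - 1)) = K * (n * (n - 1))"
    "d * (4 * s^2) = c" "c > 0" "s \<ge> 3" "n \<ge> 3"
  shows False
proof -
  have a: "c * n^2 * K \<le> gb * K" using assms by (simp add: mult_right_mono)
  have b: "s^2/2 * (gr * K) \<le> s^2/2 * (d * n^2 * K)" using assms by (simp add: mult_right_mono)
  have "s^2/2 * (d * n^2 * K) = c * n^2 * K / 8" using assms(6) by (simp add: field_simps power2_eq_square)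
  then have "c * n^2 * K \<le> N * (c/2 * s^2) + c * n^2 * K / 8" using a b assms(1) by linarith
  then have e1: "7 * (c * n^2 * K) \<le> 4 * (N * c * s^2)" by (simp add: field_simps)
  have "7 * (c * n^2 * K) * (s - 1) \<le> 4 * (N * c * s^2) * (s - 1)"
    using e1 assms(8) by (simp add: mult_right_mono)
  also have "4 * (N * c * s^2) * (s - 1) = 4 * c * s * (N * (s * (s - 1)))" by (simp add: power2_eq_square algebra_simps)
  also have "\<dots> = 4 * c * s * K * (n * (n - 1))" using assms(5) by simp
  also have "\<dots> < 4 * c * s * K * (n * n)"
    using assms by (intro mult_strict_left_mono) auto
  finally have "(c * K * (n * n)) * (7 * (s - 1)) < (c * K * (n * n)) * (4 * s)"
    by (simp add: power2_eq_square algebra_simps)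
  moreover have "c * K * (n * n) > 0" using assms by simp
  ultimately have "7 * (s - 1) < 4 * s" using mult_less_cancel_left_pos by blast
  then have "3 * s < 7" by (simp add: algebra_simps)
  then show False using assms(8) by linarith
qed

theorem lemma4p6:
  "\<forall>(t::nat) (c::real). t > 0 \<and> 0 < c \<and> c < 1 \<longrightarrow>
     (\<exists>\<delta>::real. 0 < \<delta> \<and> \<delta> < 1 \<and>
       (\<forall>(V::'a set) (GR::'a set set) (GB::'a set set).
          finite V \<and> real (card V) > c / \<delta> \<and>
          graph_on V GR \<and> graph_on V GB \<and>
          real (card GR) \<le> \<delta> * (real (card V))^2 \<and>
          real (card GB) \<ge> c * (real (card V))^2 \<longrightarrow>
          (\<exists>S \<subseteq> V. card S \<ge> t \<and>
             real (card (induced_edges GB S)) \<ge> c / 2 * (real (card S))^2 \<and>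
             induced_edges GR S = {})))"
proof (intro allI impI)
  fix t :: nat and c :: real
  assume tc: "t > 0 \<and> 0 < c \<and> c < 1"
  define s where "s = t + 2"
  have s3: "s \<ge> 3" using tc s_def by simp
  define d where "d = c / (4 * real s^2)"
  have sp: "real s^2 \<ge> 9" using s3
  proof -
    have "(3::real) \<le> real s" using s3 by simp
    then have "(3::real)^2 \<le> real s^2" by (rule power_mono) simp
    then show ?thesis by simp
  qed
  have d0: "0 < d" using tc sp s3 unfolding d_def by (intro divide_pos_pos) auto
  have d1: "d < 1"
  proof -
    have "c < 4 * real s^2" using tc sp by linarith
    then show ?thesis using sp unfolding d_def by (simp add: divide_less_eq)
  qed
  have d4: "d * (4 * real s^2) = c" using sp s3 unfolding d_def by simp
  show "\<exists>\<delta>::real. 0 < \<delta> \<and> \<delta> < 1 \<and>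
       (\<forall>(V::'a set) (GR::'a set set) (GB::'a set set).
          finite V \<and> real (card V) > c / \<delta> \<and>
          graph_on V GR \<and> graph_on V GB \<and>
          real (card GR) \<le> \<delta> * (real (card V))^2 \<and>
          real (card GB) \<ge> c * (real (card V))^2 \<longrightarrow>
          (\<exists>S \<subseteq> V. card S \<ge> t \<and>
             real (card (induced_edges GB S)) \<ge> c / 2 * (real (card S))^2 \<and>
             induced_edges GR S = {}))"
  proof (rule exI[of _ d], intro conjI allI impI d0 d1)
    fix V :: "'a set" and GR GB :: "'a set set"
    assume H: "finite V \<and> real (card V) > c / d \<and>
          graph_on V GR \<and> graph_on V GB \<and>
          real (card GR) \<le> d * (real (card V))^2 \<and>
          real (card GB) \<ge> c * (real (card V))^2"
    have fV: "finite V" and gR: "graph_on V GR" and gB: "graph_on V GB" using H by auto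
    have cd: "c / d = 4 * real s^2" using d4 d0 by (simp add: field_simps)
    have "real s \<le> real s^2" using s3 by (simp add: power2_eq_square)
    then have "real (card V) > real s" using H cd sp by linarith
    then have ns: "card V > s" by simp
    show "\<exists>S \<subseteq> V. card S \<ge> t \<and>
             real (card (induced_edges GB S)) \<ge> c / 2 * (real (card S))^2 \<and>
             induced_edges GR S = {}"
    proof (rule ccontr)
      assume no: "\<not> ?thesis"
      let ?F = "{S. S \<subseteq> V \<and> card S = s}"
      have pt: "real (card (induced_edges GB S)) \<le> c/2 * real s^2 + real s^2/2 * real (card (induced_edges GR S))"
        if "S \<in> ?F" for S
      proof (cases "induced_edges GR S = {}")
        case True
        then have "\<not> real (card (induced_edges GB S)) \<ge> c / 2 * (real (card S))^2"
          using no that s_def by auto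
        then show ?thesis using that True by auto
      next
        case False
        have fS: "finite S" using that fV finite_subset by blast
        have fR: "finite (induced_edges GR S)"
          using gR fS unfolding graph_on_def induced_edges_def
          by (metis (no_types, lifting) Pow_iff finite_Pow_iff mem_Collect_eq rev_finite_subset subsetI)
        have "card (induced_edges GR S) \<ge> 1" using False fR
          by (simp add: Suc_leI card_gt_0_iff)
        then have "real s^2/2 \<le> real s^2/2 * real (card (induced_edges GR S))"
          by (simp add: mult_le_cancel_left1)
        moreover have "real (card (induced_edges GB S)) \<le> real s^2/2"
          using induced_le[OF gB fS] that by simp
        moreover have "0 \<le> c/2 * real s^2" using tc by simp
        ultimately show ?thesis by linarith
      qed
      have "(\<Sum>S\<in>?F. real (card (induced_edges GB S))) \<le> (\<Sum>S\<in>?F. c/2 * real s^2 + real s^2/2 * real (card (induced_edges GR S)))"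
        by (rule sum_mono) (use pt in blast)
      also have "\<dots> = real (card ?F) * (c/2 * real s^2) + real s^2/2 * (\<Sum>S\<in>?F. real (card (induced_edges GR S)))"
        by (simp add: sum.distrib sum_distrib_left)
      finally have ineq: "real (card GB) * real ((card V - 2) choose (s - 2)) \<le> real (card ?F) * (c/2 * real s^2) + real s^2/2 * (real (card GR) * real ((card V - 2) choose (s - 2)))"
        using sum_induced[OF fV gB, of s] sum_induced[OF fV gR, of s] s3
        by (simp flip: of_nat_sum)
      have cF: "card ?F = card V choose s" using fV by (simp add: n_subsets)
      have "s - 2 \<le> card V - 2" using ns by linarith
      then have Kp: "real ((card V - 2) choose (s - 2)) > 0" by (simp add: zero_less_binomial_iff)
      have rel: "(card V choose s) * (s * (s - 1)) = ((card V - 2) choose (s - 2)) * (card V * (card V - 1))"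
      proof -
        have m: "card V = (card V - 2) + 2" using ns s3 by linarith
        have k: "s = (s - 2) + 2" using s3 by linarith
        have "(card V - 2 + 2 choose (s - 2 + 2)) * ((s - 2 + 2) * (s - 2 + 1)) = (card V - 2 choose (s - 2)) * ((card V - 2 + 2) * (card V - 2 + 1))"
          by (rule choose_rel)
        moreover have "s - 2 + 1 = s - 1" "card V - 2 + 1 = card V - 1" using ns s3 by linarith+
        ultimately show ?thesis using m k by metis
      qed
      have relr: "real (card V choose s) * (real s * (real s - 1)) = real ((card V - 2) choose (s - 2)) * (real (card V) * (real (card V) - 1))"
      proof -
        have "real ((card V choose s) * (s * (s - 1))) = real (((card V - 2) choose (s - 2)) * (card V * (card V - 1)))"
          using rel by simp
        then show ?thesis using ns s3 by (simp add: of_nat_diff)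
      qed
      have n3: "real (card V) \<ge> 3" using ns s3 by linarith
      have s3r: "real s \<ge> 3" using s3 by linarith
      show False
        by (rule final_arith[OF ineq[unfolded cF] _ _ Kp relr d4 _ s3r n3]) (use H tc in auto)
    qed
  qed
qed

end
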